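(* Let $\sigma$ be a finite relational signature, $\mathcal{A}$ a finite $\sigma$-structure, and $\varphi=\forall x^1,\dots,x^m\,\exists \bar y\; P(x^1,\dots,x^m,\bar y)$ a sentence where $P$ is a conjunction of atomic $\sigma$-formulas. Then $\mathcal{A}\models\varphi$ if and only if there is a homomorphism of $\sigma\cup C_m$-structures from $\mathfrak{D}_\varphi$ to $\mathfrak{A}^{|A|^m}$.
   Context: $C_m=\{c_1,\dots,c_m\}$ is a set of new constant symbols; a homomorphism of $\sigma\cup C_m$-structures preserves all relations of $\sigma$ and maps the interpretation of each $c_i$ to the interpretation of $c_i$. $\mathfrak{D}_\varphi$ is the $\sigma\cup C_m$-structure whose domain is the set of variables of $\varphi$, whose relation tuples are exactly the atoms of $P$, and in which $c_i$ is interpreted by $x^i$. For a map $\lambda:\{1,\dots,m\}\to A$, $\mathfrak{A}_\lambda$ is the expansion of $\mathcal{A}$ interpreting $c_i$ by $\lambda(i)$. The "Superprodukt" $\mathfrak{A}^{|A|^m}$ is the direct product $\bigotimes_{\lambda\in A^{\{1,\dots,m\}}}\mathfrak{A}_\lambda$: domain $A^{A^{\{1,\dots,m\}}}$, relations holding coordinatewise, and $c_i$ interpreted by the tuple whose $\lambda$-coordinate is $\lambda(i)$. *)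

theory Defs
  imports "HOL-Library.FuncSet"
begin

text \<open>A (sigma \<union> C_m)-structure
additionally carries c :: nat \<Rightarrow> 'a, where c i interprets the constant c_(i+1), i < m
(constants are indexed 0..m-1).\<close>

definition is_structure :: "'r set \<Rightarrow> ('r \<Rightarrow> nat) \<Rightarrow> 'a set \<Rightarrow> ('r \<Rightarrow> 'a list set) \<Rightarrow> bool" where
  "is_structure sig ar A I \<longleftrightarrow> A \<noteq> {} \<and>
     (\<forall>R\<in>sig. \<forall>t\<in>I R. length t = ar R \<and> set t \<subseteq> A)"

definition is_hom_C ::
  "'r set \<Rightarrow> nat \<Rightarrow> 'a set \<Rightarrow> ('r \<Rightarrow> 'a list set) \<Rightarrow> (nat \<Rightarrow> 'a)
     \<Rightarrow> 'b set \<Rightarrow> ('r \<Rightarrow> 'b list set) \<Rightarrow> (nat \<Rightarrow> 'b) \<Rightarrow> ('a \<Rightarrow> 'b) \<Rightarrow> bool" where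
  "is_hom_C sig m A I c B J d h \<longleftrightarrow>
     (\<forall>x\<in>A. h x \<in> B) \<and>
     (\<forall>R\<in>sig. \<forall>t\<in>I R. map h t \<in> J R) \<and>
     (\<forall>i<m. h (c i) = d i)"

text \<open>A sentence forall x^1..x^m exists ybar. P, with P a conjunction of relational atoms, is
represented by the list xs of universally quantified variables (x^(i+1) = xs ! i), the list
ys of existentially quantified variables and the list of atoms of P, each atom being a
relation symbol together with the tuple of variables it is applied to.\<close>

definition well_formed_sentence ::
  "'r set \<Rightarrow> ('r \<Rightarrow> nat) \<Rightarrow> 'v list \<Rightarrow> 'v list \<Rightarrow> ('r \<times> 'v list) list \<Rightarrow> bool" where
  "well_formed_sentence sig ar xs ys atoms \<longleftrightarrow>
     distinct xs \<and> distinct ys \<and> set xs \<inter> set ys = {} \<and>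
     (\<forall>(R, vs)\<in>set atoms. R \<in> sig \<and> length vs = ar R \<and> set vs \<subseteq> set xs \<union> set ys)"

definition sat_sentence ::
  "'a set \<Rightarrow> ('r \<Rightarrow> 'a list set) \<Rightarrow> 'v list \<Rightarrow> 'v list \<Rightarrow> ('r \<times> 'v list) list \<Rightarrow> bool" where
  "sat_sentence A I xs ys atoms \<longleftrightarrow>
     (\<forall>a. (\<forall>i<length xs. a i \<in> A) \<longrightarrow>
        (\<exists>s :: 'v \<Rightarrow> 'a. (\<forall>i<length xs. s (xs ! i) = a i) \<and> (\<forall>y\<in>set ys. s y \<in> A) \<and>
            (\<forall>(R, vs)\<in>set atoms. map s vs \<in> I R)))"

text \<open>The canonical structure D_phi: domain the variables of phi, relation tuples exactly
the atoms of P, constant c_(i+1) interpreted by x^(i+1).\<close>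
definition D_dom :: "'v list \<Rightarrow> 'v list \<Rightarrow> 'v set" where
  "D_dom xs ys = set xs \<union> set ys"

definition D_rel :: "('r \<times> 'v list) list \<Rightarrow> 'r \<Rightarrow> 'v list set" where
  "D_rel atoms R = {vs. (R, vs) \<in> set atoms}"

definition D_const :: "'v list \<Rightarrow> nat \<Rightarrow> 'v" where
  "D_const xs i = xs ! i"

text \<open>The Superprodukt A^(|A|^m): product over all lambda : {0..<m} \<rightarrow> A of the expansions A_lambda.
Elements are (extensional) functions from the index set to A.\<close>
definition Lam :: "nat \<Rightarrow> 'a set \<Rightarrow> (nat \<Rightarrow> 'a) set" where
  "Lam m A = PiE {..<m} (\<lambda>_. A)"

definition SP_dom :: "nat \<Rightarrow> 'a set \<Rightarrow> ((nat \<Rightarrow> 'a) \<Rightarrow> 'a) set" where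
  "SP_dom m A = PiE (Lam m A) (\<lambda>_. A)"

definition SP_rel :: "('r \<Rightarrow> nat) \<Rightarrow> nat \<Rightarrow> 'a set \<Rightarrow> ('r \<Rightarrow> 'a list set)
    \<Rightarrow> 'r \<Rightarrow> ((nat \<Rightarrow> 'a) \<Rightarrow> 'a) list set" where
  "SP_rel ar m A I R = {ts. length ts = ar R \<and> set ts \<subseteq> SP_dom m A \<and>
       (\<forall>lam\<in>Lam m A. map (\<lambda>t. t lam) ts \<in> I R)}"

definition SP_const :: "nat \<Rightarrow> 'a set \<Rightarrow> nat \<Rightarrow> ((nat \<Rightarrow> 'a) \<Rightarrow> 'a)" where
  "SP_const m A i = (\<lambda>lam\<in>Lam m A. lam i)"

end

theory Submission
  imports Defs
begin

theorem mainTheorem5: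
  fixes sig :: "'r set" and ar :: "'r \<Rightarrow> nat"
    and A :: "'a set" and I :: "'r \<Rightarrow> 'a list set"
    and xs ys :: "'v list" and atoms :: "('r \<times> 'v list) list"
  assumes "finite sig"
    and "is_structure sig ar A I"
    and "finite A"
    and "well_formed_sentence sig ar xs ys atoms"
  shows "sat_sentence A I xs ys atoms \<longleftrightarrow>
    (\<exists>h. is_hom_C sig (length xs)
            (D_dom xs ys) (D_rel atoms) (D_const xs)
            (SP_dom (length xs) A) (SP_rel ar (length xs) A I) (SP_const (length xs) A) h)"
proof
  let ?m = "length xs"
  have wf: "distinct xs" "\<And>R vs. (R, vs) \<in> set atoms \<Longrightarrow> R \<in> sig \<and> length vs = ar R \<and> set vs \<subseteq> set xs \<union> set ys"
    using assms(4) unfolding well_formed_sentence_def by auto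
  assume sat: "sat_sentence A I xs ys atoms"
  have "\<forall>lam\<in>Lam ?m A. \<exists>s :: 'v \<Rightarrow> 'a. (\<forall>i<?m. s (xs ! i) = lam i) \<and> (\<forall>y\<in>set ys. s y \<in> A) \<and>
            (\<forall>(R, vs)\<in>set atoms. map s vs \<in> I R)"
  proof
    fix lam assume "lam \<in> Lam ?m A"
    then have "\<forall>i<?m. lam i \<in> A" unfolding Lam_def by auto
    then show "\<exists>s :: 'v \<Rightarrow> 'a. (\<forall>i<?m. s (xs ! i) = lam i) \<and> (\<forall>y\<in>set ys. s y \<in> A) \<and>
            (\<forall>(R, vs)\<in>set atoms. map s vs \<in> I R)"
      using sat unfolding sat_sentence_def by blast
  qed
  then obtain S where S: "\<And>lam. lam \<in> Lam ?m A \<Longrightarrow> (\<forall>i<?m. S lam (xs ! i) = lam i) \<and> (\<forall>y\<in>set ys. S lam y \<in> A) \<and>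
            (\<forall>(R, vs)\<in>set atoms. map (S lam) vs \<in> I R)"
    by metis
  define h where "h v = (\<lambda>lam\<in>Lam ?m A. S lam v)" for v
  have inA: "S lam v \<in> A" if L: "lam \<in> Lam ?m A" and V: "v \<in> set xs \<union> set ys" for lam v
  proof (cases "v \<in> set ys")
    case True then show ?thesis using S[OF L] by auto
  next
    case False
    then obtain i where i: "i < ?m" "v = xs ! i" using V by (auto simp: in_set_conv_nth)
    then have "S lam v = lam i" using S[OF L] by auto
    moreover have "lam i \<in> A" using L i unfolding Lam_def by auto
    ultimately show ?thesis by simp
  qed
  have hdom: "h v \<in> SP_dom ?m A" if "v \<in> set xs \<union> set ys" for v
    unfolding SP_dom_def h_def using inA that by auto
  show "\<exists>h. is_hom_C sig ?m (D_dom xs ys) (D_rel atoms) (D_const xs)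
            (SP_dom ?m A) (SP_rel ar ?m A I) (SP_const ?m A) h"
  proof (intro exI[of _ h])
    show "is_hom_C sig ?m (D_dom xs ys) (D_rel atoms) (D_const xs)
            (SP_dom ?m A) (SP_rel ar ?m A I) (SP_const ?m A) h"
      unfolding is_hom_C_def
    proof (intro conjI ballI allI impI)
      fix x assume "x \<in> D_dom xs ys" then show "h x \<in> SP_dom ?m A"
        using hdom unfolding D_dom_def by auto
    next
      fix R t assume R: "R \<in> sig" and t: "t \<in> D_rel atoms R"
      then have at: "(R, t) \<in> set atoms" unfolding D_rel_def by auto
      have "map (\<lambda>u. u lam) (map h t) \<in> I R" if "lam \<in> Lam ?m A" for lam
      proof -
        have eq: "map (\<lambda>u. u lam) (map h t) = map (S lam) t" using that by (simp add: h_def)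
        have "map (S lam) t \<in> I R" using S[OF that] at by fastforce
        then show ?thesis by (simp only: eq)
      qed
      then show "map h t \<in> SP_rel ar ?m A I R"
        unfolding SP_rel_def using wf(2)[OF at] hdom by auto
    next
      fix i assume i: "i < ?m"
      show "h (D_const xs i) = SP_const ?m A i"
        unfolding D_const_def SP_const_def h_def using S i by (intro restrict_ext) auto
    qed
  qed
next
  let ?m = "length xs"
  assume "\<exists>h. is_hom_C sig ?m (D_dom xs ys) (D_rel atoms) (D_const xs)
            (SP_dom ?m A) (SP_rel ar ?m A I) (SP_const ?m A) h"
  then obtain h where h: "is_hom_C sig ?m (D_dom xs ys) (D_rel atoms) (D_const xs)
            (SP_dom ?m A) (SP_rel ar ?m A I) (SP_const ?m A) h" by blast
  have sigat: "\<And>R vs. (R, vs) \<in> set atoms \<Longrightarrow> R \<in> sig"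
    using assms(4) unfolding well_formed_sentence_def by auto
  show "sat_sentence A I xs ys atoms"
    unfolding sat_sentence_def
  proof (intro allI impI)
    fix a :: "nat \<Rightarrow> 'a" assume a: "\<forall>i<?m. a i \<in> A"
    define lam where "lam = restrict a {..<?m}"
    have lam: "lam \<in> Lam ?m A" unfolding lam_def Lam_def using a by auto
    define s where "s v = h v lam" for v
    show "\<exists>s. (\<forall>i<?m. s (xs ! i) = a i) \<and> (\<forall>y\<in>set ys. s y \<in> A) \<and>
            (\<forall>(R, vs)\<in>set atoms. map s vs \<in> I R)"
    proof (intro exI[of _ s] conjI ballI allI impI)
      fix i assume i: "i < ?m"
      have "h (D_const xs i) = SP_const ?m A i" using h i unfolding is_hom_C_def by blast
      then show "s (xs ! i) = a i" using lam i
        unfolding s_def D_const_def SP_const_def by (simp add: lam_def)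
    next
      fix y assume "y \<in> set ys"
      then have "h y \<in> SP_dom ?m A" using h unfolding is_hom_C_def D_dom_def by auto
      then show "s y \<in> A" using lam unfolding s_def SP_dom_def by auto
    next
      fix p assume p: "p \<in> set atoms"
      obtain R vs where pv: "p = (R, vs)" by (cases p)
      have "map h vs \<in> SP_rel ar ?m A I R"
        using h sigat[of R vs] p pv unfolding is_hom_C_def D_rel_def by auto
      then have "map (\<lambda>u. u lam) (map h vs) \<in> I R" using lam unfolding SP_rel_def by auto
      then show "case p of (R, vs) \<Rightarrow> map s vs \<in> I R" using pv by (simp add: s_def[abs_def] comp_def)
    qed
  qed
qed

end
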